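(* Let $X$ be an irreducible affine variety over an algebraically closed field $\mathbb{K}$ of characteristic zero, and let $U\subseteq \mathbb{K}[X]$ be a linear subspace which is invariant under all regular automorphisms of $X$. Then $\partial(U)\subseteq U$ for every locally nilpotent derivation $\partial$ of $\mathbb{K}[X]$. Moreover, if $\mathbb{K}[X]=\bigoplus_{i\in\mathbb{Z}}\mathbb{K}[X]_i$ is a $\mathbb{Z}$-graded algebra, then $U=\bigoplus_{i\in\mathbb{Z}}\bigl(U\cap \mathbb{K}[X]_i\bigr)$.
   Context: A derivation $\partial$ of $\mathbb{K}[X]$ (a $\mathbb{K}$-linear map with $\partial(ab)=a\partial(b)+b\partial(a)$) is locally nilpotent if for every $a$ there is $n$ with $\partial^n(a)=0$. Automorphisms of $X$ act on $\mathbb{K}[X]$ by pullback. *)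

theory Defs
  imports "HOL-Computational_Algebra.Polynomial"
begin

text \<open>The coordinate ring K[X] is modelled as a commutative domain 'b together with
  a ring homomorphism emb : K -> K[X] (structure map of the K-algebra).\<close>

definition alg_closed_field :: "('a::field) itself \<Rightarrow> bool" where
  "alg_closed_field _ \<longleftrightarrow> (\<forall>p :: 'a poly. degree p > 0 \<longrightarrow> (\<exists>x. poly p x = 0))"

definition structure_map :: "('a::field \<Rightarrow> 'b::idom) \<Rightarrow> bool" where
  "structure_map emb \<longleftrightarrow> emb 1 = 1 \<and> (\<forall>x y. emb (x + y) = emb x + emb y)
      \<and> (\<forall>x y. emb (x * y) = emb x * emb y)"

inductive_set subalg_gen :: "('a::field \<Rightarrow> 'b::idom) \<Rightarrow> 'b set \<Rightarrow> 'b set"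
  for emb :: "'a \<Rightarrow> 'b" and S :: "'b set" where
  scal: "emb c \<in> subalg_gen emb S"
| gen: "s \<in> S \<Longrightarrow> s \<in> subalg_gen emb S"
| add: "x \<in> subalg_gen emb S \<Longrightarrow> y \<in> subalg_gen emb S \<Longrightarrow> x + y \<in> subalg_gen emb S"
| mult: "x \<in> subalg_gen emb S \<Longrightarrow> y \<in> subalg_gen emb S \<Longrightarrow> x * y \<in> subalg_gen emb S"

definition finitely_generated_alg :: "('a::field \<Rightarrow> 'b::idom) \<Rightarrow> bool" where
  "finitely_generated_alg emb \<longleftrightarrow> (\<exists>S. finite S \<and> subalg_gen emb S = UNIV)"

definition lin_subspace :: "('a::field \<Rightarrow> 'b::idom) \<Rightarrow> 'b set \<Rightarrow> bool" where
  "lin_subspace emb U \<longleftrightarrow> 0 \<in> U \<and> (\<forall>x\<in>U. \<forall>y\<in>U. x + y \<in> U)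
      \<and> (\<forall>c. \<forall>x\<in>U. emb c * x \<in> U)"

definition lin_map :: "('a::field \<Rightarrow> 'b::idom) \<Rightarrow> ('b \<Rightarrow> 'b) \<Rightarrow> bool" where
  "lin_map emb f \<longleftrightarrow> (\<forall>x y. f (x + y) = f x + f y) \<and> (\<forall>c x. f (emb c * x) = emb c * f x)"

text \<open>K-algebra automorphisms of K[X]; these are exactly the pullbacks of the
  regular automorphisms of X.\<close>
definition alg_aut :: "('a::field \<Rightarrow> 'b::idom) \<Rightarrow> ('b \<Rightarrow> 'b) \<Rightarrow> bool" where
  "alg_aut emb \<phi> \<longleftrightarrow> bij \<phi> \<and> lin_map emb \<phi> \<and> (\<forall>x y. \<phi> (x * y) = \<phi> x * \<phi> y) \<and> \<phi> 1 = 1"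

definition derivation :: "('a::field \<Rightarrow> 'b::idom) \<Rightarrow> ('b \<Rightarrow> 'b) \<Rightarrow> bool" where
  "derivation emb D \<longleftrightarrow> lin_map emb D \<and> (\<forall>a b. D (a * b) = a * D b + b * D a)"

definition locally_nilpotent :: "('b \<Rightarrow> 'b::idom) \<Rightarrow> bool" where
  "locally_nilpotent D \<longleftrightarrow> (\<forall>a. \<exists>n. (D ^^ n) a = 0)"

definition internal_direct_sum :: "'b::comm_monoid_add set \<Rightarrow> (int \<Rightarrow> 'b set) \<Rightarrow> bool" where
  "internal_direct_sum V B \<longleftrightarrow>
     (\<forall>v. v \<in> V \<longleftrightarrow> (\<exists>f. finite {i. f i \<noteq> 0} \<and> (\<forall>i. f i \<in> B i) \<and> v = (\<Sum>i\<in>{i. f i \<noteq> 0}. f i)))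
   \<and> (\<forall>f g. finite {i. f i \<noteq> 0} \<and> finite {i. g i \<noteq> 0} \<and> (\<forall>i. f i \<in> B i) \<and> (\<forall>i. g i \<in> B i)
        \<and> (\<Sum>i\<in>{i. f i \<noteq> 0}. f i) = (\<Sum>i\<in>{i. g i \<noteq> 0}. g i) \<longrightarrow> f = g)"

definition Z_graded_alg :: "('a::field \<Rightarrow> 'b::idom) \<Rightarrow> (int \<Rightarrow> 'b set) \<Rightarrow> bool" where
  "Z_graded_alg emb A \<longleftrightarrow> (\<forall>i. lin_subspace emb (A i))
     \<and> (\<forall>i j. \<forall>x\<in>A i. \<forall>y\<in>A j. x * y \<in> A (i + j))
     \<and> internal_direct_sum UNIV A"

end

theory Submission
  imports Defs
begin


lemma sm_add: "structure_map emb \<Longrightarrow> emb (x + y) = emb x + emb y"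
  by (simp add: structure_map_def)
lemma sm_mult: "structure_map emb \<Longrightarrow> emb (x * y) = emb x * emb y"
  by (simp add: structure_map_def)
lemma sm_one: "structure_map emb \<Longrightarrow> emb 1 = 1"
  by (simp add: structure_map_def)
lemma sm_zero: "structure_map emb \<Longrightarrow> emb 0 = 0"
proof -
  assume "structure_map emb"
  then have "emb 0 + emb 0 = emb 0 + 0" using sm_add[of emb 0 0] by simp
  then show ?thesis by (rule add_left_cancel[THEN iffD1])
qed
lemma sm_uminus: "structure_map emb \<Longrightarrow> emb (- x) = - emb x"
  using sm_add[of emb x "-x"] sm_zero[of emb] by (simp add: eq_neg_iff_add_eq_0 add.commute)
lemma sm_diff: "structure_map emb \<Longrightarrow> emb (x - y) = emb x - emb y"
  using sm_add[of emb x "-y"] sm_uminus[of emb y] by simp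
lemma sm_power: "structure_map emb \<Longrightarrow> emb (x ^ n) = emb x ^ n"
  by (induct n) (simp_all add: sm_one sm_mult)
lemma sm_of_nat: "structure_map emb \<Longrightarrow> emb (of_nat n) = of_nat n"
  by (induct n) (simp_all add: sm_one sm_add sm_zero)
lemma sm_sum: "structure_map emb \<Longrightarrow> emb (sum f S) = (\<Sum>i\<in>S. emb (f i))"
  by (induct S rule: infinite_finite_induct) (simp_all add: sm_zero sm_add)
lemma sm_inv: "structure_map emb \<Longrightarrow> x \<noteq> 0 \<Longrightarrow> emb (inverse x) * emb x = 1"
  by (metis sm_mult sm_one left_inverse)

lemma ls_zero: "lin_subspace emb U \<Longrightarrow> 0 \<in> U" by (simp add: lin_subspace_def)
lemma ls_add: "lin_subspace emb U \<Longrightarrow> x \<in> U \<Longrightarrow> y \<in> U \<Longrightarrow> x + y \<in> U"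
  by (simp add: lin_subspace_def)
lemma ls_scal: "lin_subspace emb U \<Longrightarrow> x \<in> U \<Longrightarrow> emb c * x \<in> U"
  by (simp add: lin_subspace_def)
lemma ls_uminus: "structure_map emb \<Longrightarrow> lin_subspace emb U \<Longrightarrow> x \<in> U \<Longrightarrow> - x \<in> U"
  using ls_scal[of emb U x "-1"] by (simp add: sm_uminus sm_one)
lemma ls_diff: "structure_map emb \<Longrightarrow> lin_subspace emb U \<Longrightarrow> x \<in> U \<Longrightarrow> y \<in> U \<Longrightarrow> x - y \<in> U"
  using ls_add[of emb U x "-y"] ls_uminus[of emb U y] by simp
lemma ls_sum: "lin_subspace emb U \<Longrightarrow> (\<And>i. i \<in> S \<Longrightarrow> f i \<in> U) \<Longrightarrow> sum f S \<in> U"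
  by (induct S rule: infinite_finite_induct) (simp_all add: ls_zero ls_add)

lemma poly_lemma:
  fixes emb :: "'a::field_char_0 \<Rightarrow> 'b::idom"
  assumes sm: "structure_map emb" and ls: "lin_subspace emb U"
  shows "(\<And>t. t \<noteq> 0 \<Longrightarrow> (\<Sum>k<m. emb (t ^ k) * v k) \<in> U) \<Longrightarrow> k < m \<Longrightarrow> v k \<in> U"
proof (induct m arbitrary: v k)
  case 0 then show ?case by simp
next
  case (Suc m)
  define w where "w k = emb (2 ^ k - 2 ^ m) * v k" for k
  have w: "(\<Sum>k<m. emb (t ^ k) * w k) \<in> U" if t: "t \<noteq> 0" for t
  proof -
    have "(\<Sum>k<m. emb (t ^ k) * w k) = (\<Sum>k<Suc m. emb ((2*t) ^ k) * v k) - emb (2^m) * (\<Sum>k<Suc m. emb (t ^ k) * v k)"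
      by (simp add: w_def sum_distrib_left sum_subtractf[symmetric] sm_diff[OF sm] sm_mult[OF sm] sm_power[OF sm]
          algebra_simps power_mult_distrib)
    also have "\<dots> \<in> U"
      using Suc.prems(1)[of "2*t"] Suc.prems(1)[OF t] t
      by (intro ls_diff[OF sm ls] ls_scal[OF ls]) auto
    finally show ?thesis .
  qed
  have lo: "v k \<in> U" if "k < m" for k
  proof -
    have ne: "(2::'a) ^ k - 2 ^ m \<noteq> 0"
    proof
      assume "(2::'a) ^ k - 2 ^ m = 0"
      then have "(of_nat (2 ^ k) :: 'a) = of_nat (2 ^ m)" by simp
      then have "(2::nat) ^ k = 2 ^ m" using of_nat_eq_iff by blast
      with that show False by simp
    qed
    have "w k \<in> U" using Suc.hyps[of w k] w that by blast
    then have "emb (inverse (2 ^ k - 2 ^ m)) * w k \<in> U" by (rule ls_scal[OF ls])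
    also have "emb (inverse (2 ^ k - 2 ^ m)) * w k = v k"
      unfolding w_def mult.assoc[symmetric] sm_inv[OF sm ne] by simp
    finally show ?thesis .
  qed
  have "(\<Sum>k<Suc m. emb (1 ^ k) * v k) - (\<Sum>k<m. v k) \<in> U"
    using Suc.prems(1)[of 1] ls_sum[OF ls, of "{..<m}" v] lo by (intro ls_diff[OF sm ls]) auto
  also have "(\<Sum>k<Suc m. emb (1 ^ k) * v k) - (\<Sum>k<m. v k) = v m"
    by (simp add: sm_one[OF sm])
  finally have "v m \<in> U" .
  with lo Suc.prems(2) show ?case by (auto simp: less_Suc_eq)
qed



definition comp :: "(int \<Rightarrow> 'b::idom set) \<Rightarrow> int \<Rightarrow> 'b \<Rightarrow> 'b" where
  "comp A i x = (SOME f. finite {i. f i \<noteq> 0} \<and> (\<forall>i. f i \<in> A i) \<and> x = (\<Sum>i\<in>{i. f i \<noteq> 0}. f i)) i"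

definition supp :: "(int \<Rightarrow> 'b::idom set) \<Rightarrow> 'b \<Rightarrow> int set" where
  "supp A x = {i. comp A i x \<noteq> 0}"

context
  fixes emb :: "'a::field \<Rightarrow> 'b::idom" and A :: "int \<Rightarrow> 'b set"
  assumes sm: "structure_map emb" and G: "Z_graded_alg emb A"
begin

lemma A_ls: "lin_subspace emb (A i)" using G by (simp add: Z_graded_alg_def)
lemma A_mult: "x \<in> A i \<Longrightarrow> y \<in> A j \<Longrightarrow> x * y \<in> A (i + j)" using G by (simp add: Z_graded_alg_def)
lemma A_ids: "internal_direct_sum UNIV A" using G by (simp add: Z_graded_alg_def)

lemma comp_ex: "finite (supp A x) \<and> (\<forall>i. comp A i x \<in> A i) \<and> x = (\<Sum>i\<in>supp A x. comp A i x)"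
proof -
  have "\<exists>f. finite {i. f i \<noteq> 0} \<and> (\<forall>i. f i \<in> A i) \<and> x = (\<Sum>i\<in>{i. f i \<noteq> 0}. f i)"
    using A_ids unfolding internal_direct_sum_def by blast
  from someI_ex[OF this] show ?thesis unfolding supp_def comp_def by blast
qed

lemma fin_supp: "finite (supp A x)" using comp_ex by blast
lemma comp_in: "comp A i x \<in> A i" using comp_ex by blast

lemma comp_sum: "finite S \<Longrightarrow> supp A x \<subseteq> S \<Longrightarrow> x = (\<Sum>i\<in>S. comp A i x)"
proof -
  assume a: "finite S" "supp A x \<subseteq> S"
  have "(\<Sum>i\<in>S. comp A i x) = (\<Sum>i\<in>supp A x. comp A i x)"
    by (rule sum.mono_neutral_right[OF a(1) a(2)]) (auto simp: supp_def)
  then show ?thesis using comp_ex[of x] by simp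
qed

lemma comp_uniq:
  assumes "finite S" "\<And>i. g i \<in> A i" "\<And>i. i \<notin> S \<Longrightarrow> g i = 0" "x = (\<Sum>i\<in>S. g i)"
  shows "comp A i x = g i"
proof -
  have sub: "{i. g i \<noteq> 0} \<subseteq> S" using assms(3) by blast
  have fin: "finite {i. g i \<noteq> 0}" using sub assms(1) finite_subset by blast
  have "(\<Sum>i\<in>{i. g i \<noteq> 0}. g i) = (\<Sum>i\<in>S. g i)" by (rule sum.mono_neutral_left[OF assms(1) sub]) auto
  then have "x = (\<Sum>i\<in>{i. g i \<noteq> 0}. g i)" using assms(4) by simp
  moreover have "x = (\<Sum>i\<in>{i. comp A i x \<noteq> 0}. comp A i x)" using comp_ex[of x] by (simp add: supp_def)
  moreover have "finite {i. comp A i x \<noteq> 0}" using fin_supp by (simp add: supp_def)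
  moreover have U: "\<And>f g. finite {i. f i \<noteq> 0} \<Longrightarrow> finite {i. g i \<noteq> 0} \<Longrightarrow> (\<forall>i. f i \<in> A i) \<Longrightarrow> (\<forall>i. g i \<in> A i)
      \<Longrightarrow> (\<Sum>i\<in>{i. f i \<noteq> 0}. f i) = (\<Sum>i\<in>{i. g i \<noteq> 0}. g i) \<Longrightarrow> f = g"
    using A_ids unfolding internal_direct_sum_def by blast
  ultimately have "g = (\<lambda>i. comp A i x)"
    using fin assms(2) comp_in by (intro U) auto
  then show ?thesis by simp
qed

lemma comp_add: "comp A i (x + y) = comp A i x + comp A i y"
  apply (rule comp_uniq[where S="supp A x \<union> supp A y"])
  using fin_supp apply simp
  using comp_in ls_add[OF A_ls] apply blast
  apply (simp add: supp_def)
  by (simp add: sum.distrib comp_sum[symmetric] fin_supp)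

definition phi :: "'a \<Rightarrow> 'b \<Rightarrow> 'b" where
  "phi l x = (\<Sum>i\<in>supp A x. emb (l powi i) * comp A i x)"

lemma phi_sup: "finite S \<Longrightarrow> supp A x \<subseteq> S \<Longrightarrow> phi l x = (\<Sum>i\<in>S. emb (l powi i) * comp A i x)"
  unfolding phi_def by (rule sum.mono_neutral_left) (auto simp: supp_def)

lemma comp_scal: "comp A i (emb c * x) = emb c * comp A i x"
  apply (rule comp_uniq[where S="supp A x"])
  using fin_supp apply simp
  using comp_in ls_scal[OF A_ls] apply blast
  apply (simp add: supp_def)
  by (simp only: sum_distrib_left[symmetric] comp_ex[of x, THEN conjunct2, THEN conjunct2, symmetric])

lemma comp_phi: "comp A i (phi l x) = emb (l powi i) * comp A i x"
  apply (rule comp_uniq[where S="supp A x"])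
  using fin_supp apply simp
  using comp_in ls_scal[OF A_ls] apply blast
  apply (simp add: supp_def)
  by (simp add: phi_def)

lemma phi_phi: assumes "l * m = 1" shows "phi l (phi m x) = x"
proof -
  have "phi l (phi m x) = (\<Sum>i\<in>supp A x. emb (l powi i) * comp A i (phi m x))"
    by (rule phi_sup) (auto simp: fin_supp[unfolded supp_def] supp_def comp_phi)
  also have "\<dots> = (\<Sum>i\<in>supp A x. comp A i x)"
    by (simp add: comp_phi mult.assoc[symmetric] sm_mult[OF sm, symmetric] power_int_mult_distrib[symmetric] assms sm_one[OF sm])
  also have "\<dots> = x" using comp_sum[of "supp A x" x] fin_supp by simp
  finally show ?thesis .
qed

lemma phi_add: "phi l (x + y) = phi l x + phi l y"
proof -
  let ?S = "supp A x \<union> supp A y"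
  have f: "finite ?S" using fin_supp by simp
  have "phi l (x + y) = (\<Sum>i\<in>?S. emb (l powi i) * comp A i (x + y))"
    by (rule phi_sup[OF f]) (auto simp: supp_def comp_add fin_supp[unfolded supp_def])
  also have "\<dots> = (\<Sum>i\<in>?S. emb (l powi i) * comp A i x) + (\<Sum>i\<in>?S. emb (l powi i) * comp A i y)"
    by (simp add: comp_add distrib_left sum.distrib)
  also have "\<dots> = phi l x + phi l y" using phi_sup[OF f] by simp
  finally show ?thesis .
qed

lemma phi_scal: "phi l (emb c * x) = emb c * phi l x"
proof -
  have "phi l (emb c * x) = (\<Sum>i\<in>supp A x. emb (l powi i) * comp A i (emb c * x))"
    by (rule phi_sup) (auto simp: supp_def comp_scal fin_supp[unfolded supp_def])
  also have "\<dots> = emb c * phi l x"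
    unfolding comp_scal phi_def sum_distrib_left by (simp add: mult.left_commute)
  finally show ?thesis .
qed

lemma comp_mult:
  "comp A n (x * y) = (\<Sum>p\<in>{p \<in> supp A x \<times> supp A y. fst p + snd p = n}. comp A (fst p) x * comp A (snd p) y)"
proof (rule comp_uniq[where S="(\<lambda>p. fst p + snd p) ` (supp A x \<times> supp A y)"])
  show "finite ((\<lambda>p. fst p + snd p) ` (supp A x \<times> supp A y))" using fin_supp by simp
  show "(\<Sum>p\<in>{p \<in> supp A x \<times> supp A y. fst p + snd p = i}. comp A (fst p) x * comp A (snd p) y) \<in> A i" for i
    by (rule ls_sum[OF A_ls]) (metis (mono_tags, lifting) A_mult comp_in mem_Collect_eq)
  show "(\<Sum>p\<in>{p \<in> supp A x \<times> supp A y. fst p + snd p = i}. comp A (fst p) x * comp A (snd p) y) = 0"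
    if "i \<notin> (\<lambda>p. fst p + snd p) ` (supp A x \<times> supp A y)" for i
    using that by (intro sum.neutral) force
  have "x * y = (\<Sum>i\<in>supp A x. comp A i x) * (\<Sum>j\<in>supp A y. comp A j y)"
    using comp_ex[of x] comp_ex[of y] by simp
  also have "\<dots> = (\<Sum>p\<in>supp A x \<times> supp A y. comp A (fst p) x * comp A (snd p) y)"
    by (simp add: sum_product sum.cartesian_product case_prod_beta)
  also have "\<dots> = (\<Sum>n\<in>(\<lambda>p. fst p + snd p) ` (supp A x \<times> supp A y).
      \<Sum>p\<in>{p \<in> supp A x \<times> supp A y. fst p + snd p = n}. comp A (fst p) x * comp A (snd p) y)"
    by (rule sum.group[symmetric]) (auto simp: fin_supp)
  finally show "x * y = \<dots>" .
qed

lemma phi_mult: assumes l: "l \<noteq> 0" shows "phi l (x * y) = phi l x * phi l y"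
proof -
  let ?P = "supp A x \<times> supp A y"
  let ?S = "(\<lambda>p. fst p + snd p) ` ?P"
  let ?h = "\<lambda>p. comp A (fst p) x * comp A (snd p) y"
  have f: "finite ?S" "finite ?P" using fin_supp by auto
  have "phi l (x * y) = (\<Sum>n\<in>?S. emb (l powi n) * comp A n (x * y))"
  proof (rule phi_sup[OF f(1)])
    show "supp A (x * y) \<subseteq> ?S"
    proof
      fix n assume "n \<in> supp A (x * y)"
      then have "(\<Sum>p\<in>{p \<in> ?P. fst p + snd p = n}. ?h p) \<noteq> 0"
        unfolding supp_def[of A "x * y"] mem_Collect_eq comp_mult .
      then have "{p \<in> ?P. fst p + snd p = n} \<noteq> {}" by (metis sum.empty)
      then show "n \<in> ?S" by force
    qed
  qed
  also have "\<dots> = (\<Sum>n\<in>?S. \<Sum>p\<in>{p \<in> ?P. fst p + snd p = n}. emb (l powi (fst p + snd p)) * ?h p)"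
    unfolding comp_mult sum_distrib_left by (intro sum.cong refl) auto
  also have "\<dots> = (\<Sum>p\<in>?P. emb (l powi (fst p + snd p)) * ?h p)"
    by (rule sum.group) (use f in auto)
  also have "\<dots> = (\<Sum>p\<in>?P. (emb (l powi fst p) * comp A (fst p) x) * (emb (l powi snd p) * comp A (snd p) y))"
    by (intro sum.cong refl) (simp add: power_int_add l sm_mult[OF sm] algebra_simps)
  also have "\<dots> = phi l x * phi l y"
    unfolding phi_def sum_product sum.cartesian_product by (simp add: case_prod_beta)
  finally show ?thesis .
qed

lemma phi_aut: assumes l: "l \<noteq> 0" shows "alg_aut emb (phi l)"
proof -
  have b: "bij (phi l)"
    by (rule o_bij[where g="phi (inverse l)"]) (auto simp: phi_phi l)
  have "phi l 0 + phi l 0 = phi l 0 + 0" using phi_add[of l 0 0] by simp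
  then have z: "phi l 0 = 0" by (rule add_left_cancel[THEN iffD1])
  have "phi l 1 \<noteq> 0" using b z by (metis bij_pointE zero_neq_one)
  moreover have "phi l 1 * phi l 1 = phi l 1 * 1" using phi_mult[OF l, of 1 1] by simp
  ultimately have "phi l 1 = 1" by simp
  then show ?thesis using b phi_add phi_scal phi_mult[OF l]
    by (simp add: alg_aut_def lin_map_def)
qed

end


lemma graded_part:
  fixes emb :: "'a::field_char_0 \<Rightarrow> 'b::idom"
  assumes sm: "structure_map emb" and ls: "lin_subspace emb U"
    and aut: "\<And>\<phi>. alg_aut emb \<phi> \<Longrightarrow> \<phi> ` U \<subseteq> U" and G: "Z_graded_alg emb A"
  shows "internal_direct_sum U (\<lambda>i. U \<inter> A i)"
proof -
  have compU: "comp A i v \<in> U" if v: "v \<in> U" for v i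
  proof (cases "i \<in> supp A v")
    case False then show ?thesis by (simp add: supp_def ls_zero[OF ls])
  next
    case True
    let ?S = "supp A v"
    define d where "d = Min ?S"
    define M where "M = Max ?S"
    define m where "m = Suc (nat (M - d))"
    have fS: "finite ?S" using fin_supp[OF sm G] .
    have bnd: "d \<le> j \<and> j \<le> M" if "j \<in> ?S" for j
      using that fS d_def M_def by auto
    have sub: "?S \<subseteq> (\<lambda>k. d + int k) ` {..<m}"
    proof
      fix j assume j: "j \<in> ?S"
      then have "j = d + int (nat (j - d))" "nat (j - d) < m" using bnd[OF j] m_def by auto
      then show "j \<in> (\<lambda>k. d + int k) ` {..<m}" by blast
    qed
    have key: "(\<Sum>k<m. emb (t ^ k) * comp A (d + int k) v) \<in> U" if t: "t \<noteq> 0" for t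
    proof -
      have "phi emb A t v \<in> U" using aut[OF phi_aut[OF sm G t]] v by blast
      then have "emb (t powi (-d)) * phi emb A t v \<in> U" by (rule ls_scal[OF ls])
      also have "phi emb A t v = (\<Sum>i\<in>(\<lambda>k. d + int k) ` {..<m}. emb (t powi i) * comp A i v)"
        by (rule phi_sup[OF sm G]) (use sub in auto)
      also have "\<dots> = (\<Sum>k<m. emb (t powi (d + int k)) * comp A (d + int k) v)"
        by (subst sum.reindex) (auto simp: inj_on_def)
      also have "emb (t powi (-d)) * \<dots> = (\<Sum>k<m. emb (t ^ k) * comp A (d + int k) v)"
        unfolding sum_distrib_left
      proof (intro sum.cong refl)
        fix k
        have "t powi (-d) * t powi (d + int k) = t ^ k"
          using power_int_add[of t "-d" "d + int k"] t by simp
        then show "emb (t powi - d) * (emb (t powi (d + int k)) * comp A (d + int k) v) =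
            emb (t ^ k) * comp A (d + int k) v"
          by (metis mult.assoc sm_mult[OF sm])
      qed
      finally show ?thesis .
    qed
    have "i = d + int (nat (i - d))" "nat (i - d) < m" using bnd[OF True] m_def by auto
    then show ?thesis using poly_lemma[OF sm ls, where m=m and v="\<lambda>k. comp A (d + int k) v" and k="nat (i - d)"] key
      by metis
  qed
  have U: "\<And>f g. finite {i. f i \<noteq> 0} \<Longrightarrow> finite {i. g i \<noteq> 0} \<Longrightarrow> (\<forall>i. f i \<in> A i) \<Longrightarrow> (\<forall>i. g i \<in> A i)
      \<Longrightarrow> (\<Sum>i\<in>{i. f i \<noteq> 0}. f i) = (\<Sum>i\<in>{i. g i \<noteq> 0}. g i) \<Longrightarrow> f = g"
    using A_ids[OF sm G] unfolding internal_direct_sum_def by blast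
  have E: "v \<in> U \<longleftrightarrow> (\<exists>f. finite {i. f i \<noteq> 0} \<and> (\<forall>i. f i \<in> U \<inter> A i) \<and> v = (\<Sum>i\<in>{i. f i \<noteq> 0}. f i))" for v
  proof
    assume v: "v \<in> U"
    show "\<exists>f. finite {i. f i \<noteq> 0} \<and> (\<forall>i. f i \<in> U \<inter> A i) \<and> v = (\<Sum>i\<in>{i. f i \<noteq> 0}. f i)"
      using comp_ex[OF sm G, of v] compU[OF v] comp_in[OF sm G] unfolding supp_def
      by (intro exI[of _ "\<lambda>i. comp A i v"]) auto
  next
    assume "\<exists>f. finite {i. f i \<noteq> 0} \<and> (\<forall>i. f i \<in> U \<inter> A i) \<and> v = (\<Sum>i\<in>{i. f i \<noteq> 0}. f i)"
    then obtain f where "\<forall>i. f i \<in> U \<inter> A i" "v = (\<Sum>i\<in>{i. f i \<noteq> 0}. f i)" by blast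
    then show "v \<in> U" using ls_sum[OF ls, of "{i. f i \<noteq> 0}" f] by auto
  qed
  show ?thesis unfolding internal_direct_sum_def using E U by blast
qed



definition nil :: "('b \<Rightarrow> 'b::idom) \<Rightarrow> 'b \<Rightarrow> nat" where
  "nil D x = (LEAST n. (D ^^ n) x = 0)"

definition cf :: "('a::field_char_0 \<Rightarrow> 'b::idom) \<Rightarrow> 'a \<Rightarrow> nat \<Rightarrow> 'b" where
  "cf emb t k = emb (t ^ k / fact k)"

definition Ex :: "('a::field_char_0 \<Rightarrow> 'b::idom) \<Rightarrow> ('b \<Rightarrow> 'b) \<Rightarrow> 'a \<Rightarrow> 'b \<Rightarrow> 'b" where
  "Ex emb D t x = (\<Sum>k<nil D x. cf emb t k * (D ^^ k) x)"

context
  fixes emb :: "'a::field_char_0 \<Rightarrow> 'b::idom" and D :: "'b \<Rightarrow> 'b"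
  assumes sm: "structure_map emb" and der: "derivation emb D" and lnd: "locally_nilpotent D"
begin

lemma D_add: "D (x + y) = D x + D y" using der unfolding derivation_def lin_map_def by blast
lemma D_scal: "D (emb c * x) = emb c * D x" using der unfolding derivation_def lin_map_def by blast
lemma D_mult: "D (a * b) = a * D b + b * D a" using der unfolding derivation_def by blast
lemma D_zero: "D 0 = 0"
proof -
  have "D 0 + D 0 = D 0 + 0" using D_add[of 0 0] by simp
  then show ?thesis by (rule add_left_cancel[THEN iffD1])
qed
lemma D_one: "D 1 = 0"
proof -
  have "D 1 + D 1 = D 1 + 0" using D_mult[of 1 1] by simp
  then show ?thesis by (rule add_left_cancel[THEN iffD1])
qed
lemma D_of_nat: "D (of_nat c * x) = of_nat c * D x"
  using D_scal[of "of_nat c" x] by (simp add: sm_of_nat[OF sm])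

lemma Dk_add: "(D ^^ k) (x + y) = (D ^^ k) x + (D ^^ k) y"
  by (induct k) (simp_all add: D_add)
lemma Dk_scal: "(D ^^ k) (emb c * x) = emb c * (D ^^ k) x"
  by (induct k) (simp_all add: D_scal)
lemma Dk_zero: "(D ^^ k) 0 = 0"
  by (induct k) (simp_all add: D_zero)
lemma Dk_sum: "(D ^^ k) (sum f S) = (\<Sum>i\<in>S. (D ^^ k) (f i))"
  by (induct S rule: infinite_finite_induct) (simp_all add: Dk_zero Dk_add)
lemma Dk_Dk: "(D ^^ j) ((D ^^ i) x) = (D ^^ (j + i)) x"
  by (simp add: funpow_add)
lemma Dk_stay: "(D ^^ n) x = 0 \<Longrightarrow> n \<le> m \<Longrightarrow> (D ^^ m) x = 0"
  by (metis Dk_Dk Dk_zero le_add_diff_inverse2)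

lemma leibniz:
  "(D ^^ n) (a * b) = (\<Sum>i\<le>n. of_nat (n choose i) * ((D ^^ i) a * (D ^^ (n - i)) b))"
proof (induct n)
  case 0 then show ?case by simp
next
  case (Suc n)
  let ?X = "\<lambda>i. (D ^^ i) a" and ?Y = "\<lambda>j. (D ^^ j) b"
  define g where "g i = of_nat (n choose i) * (?X i * ?Y (Suc n - i))" for i
  have D_sum: "D (sum f S) = (\<Sum>i\<in>S. D (f i))" for f :: "nat \<Rightarrow> 'b" and S
    using Dk_sum[of 1 f S] by simp
  have "(D ^^ Suc n) (a * b) = D ((D ^^ n) (a * b))" by simp
  also have "\<dots> = (\<Sum>i\<le>n. of_nat (n choose i) * (?X (Suc i) * ?Y (n - i)) + g i)"
    unfolding Suc D_sum
  proof (intro sum.cong refl)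
    fix i assume "i \<in> {..n}"
    then have "Suc n - i = Suc (n - i)" by (simp add: Suc_diff_le)
    then show "D (of_nat (n choose i) * (?X i * ?Y (n - i))) =
        of_nat (n choose i) * (?X (Suc i) * ?Y (n - i)) + g i"
      unfolding g_def by (subst D_of_nat, subst D_mult) (simp add: algebra_simps)
  qed
  also have "\<dots> = (\<Sum>i\<le>n. of_nat (n choose i) * (?X (Suc i) * ?Y (n - i))) + (\<Sum>i\<le>n. g i)"
    by (rule sum.distrib)
  also have "(\<Sum>i\<le>n. g i) = (\<Sum>i\<le>Suc n. g i)" by (simp add: g_def binomial_eq_0)
  also have "\<dots> = g 0 + (\<Sum>i\<le>n. g (Suc i))" by (rule sum.atMost_Suc_shift)
  also have "(\<Sum>i\<le>n. of_nat (n choose i) * (?X (Suc i) * ?Y (n - i))) + (g 0 + (\<Sum>i\<le>n. g (Suc i)))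
      = ?X 0 * ?Y (Suc n) + (\<Sum>i\<le>n. of_nat (Suc n choose Suc i) * (?X (Suc i) * ?Y (Suc n - Suc i)))"
    by (simp add: g_def sum.distrib algebra_simps)
  also have "\<dots> = (\<Sum>i\<le>Suc n. of_nat (Suc n choose i) * (?X i * ?Y (Suc n - i)))"
    by (subst sum.atMost_Suc_shift) simp
  finally show ?case .
qed

lemma nil_spec: "(D ^^ nil D x) x = 0"
  unfolding nil_def by (rule LeastI_ex) (use lnd locally_nilpotent_def in blast)

lemma nil_le: "(D ^^ n) x = 0 \<Longrightarrow> nil D x \<le> n"
  unfolding nil_def by (rule Least_le)

lemma Ex_cut: assumes "(D ^^ n) x = 0" shows "Ex emb D t x = (\<Sum>k<n. cf emb t k * (D ^^ k) x)"
  unfolding Ex_def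
proof (rule sum.mono_neutral_left)
  show "{..<nil D x} \<subseteq> {..<n}" using nil_le[OF assms] by auto
  show "\<forall>i\<in>{..<n} - {..<nil D x}. cf emb t i * (D ^^ i) x = 0"
    using Dk_stay[OF nil_spec] by auto
qed auto

lemma Ex_add: "Ex emb D t (x + y) = Ex emb D t x + Ex emb D t y"
proof -
  let ?n = "nil D x + nil D y"
  have x: "(D ^^ ?n) x = 0" and y: "(D ^^ ?n) y = 0" using Dk_stay[OF nil_spec] by auto
  have xy: "(D ^^ ?n) (x + y) = 0" using x y by (simp add: Dk_add)
  show ?thesis unfolding Ex_cut[OF x] Ex_cut[OF y] Ex_cut[OF xy]
    by (simp add: Dk_add distrib_left sum.distrib)
qed

lemma Ex_scal: "Ex emb D t (emb c * x) = emb c * Ex emb D t x"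
proof -
  have x: "(D ^^ nil D x) x = 0" by (rule nil_spec)
  have cx: "(D ^^ nil D x) (emb c * x) = 0" using x by (simp add: Dk_scal)
  show ?thesis unfolding Ex_cut[OF x] Ex_cut[OF cx] Dk_scal sum_distrib_left
    by (simp add: mult.left_commute)
qed

lemma Ex_one: "Ex emb D t 1 = 1"
proof -
  have "(D ^^ 1) 1 = 0" by (simp add: D_one)
  then have "Ex emb D t 1 = (\<Sum>k<1. cf emb t k * (D ^^ k) 1)" by (rule Ex_cut)
  then show ?thesis by (simp add: cf_def sm_one[OF sm])
qed

lemma cf_mult: "cf emb t i * cf emb t j = cf emb t (i + j) * of_nat ((i + j) choose i)"
proof -
  have "t ^ i / fact i * (t ^ j / fact j) = t ^ (i + j) / fact (i + j) * of_nat ((i + j) choose i)"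
    by (simp add: binomial_fact power_add field_simps)
  then show ?thesis unfolding cf_def sm_mult[OF sm, symmetric] sm_of_nat[OF sm, symmetric] by simp
qed

lemma Ex_mult: "Ex emb D t (a * b) = Ex emb D t a * Ex emb D t b"
proof -
  let ?na = "nil D a" and ?nb = "nil D b"
  let ?n = "?na + ?nb"
  let ?P = "\<lambda>i. cf emb t i * (D ^^ i) a" and ?Q = "\<lambda>j. cf emb t j * (D ^^ j) b"
  have a: "(D ^^ ?na) a = 0" and b: "(D ^^ ?nb) b = 0" by (rule nil_spec)+
  have za: "(D ^^ i) a = 0" if "?na \<le> i" for i using Dk_stay[OF a that] .
  have zb: "(D ^^ i) b = 0" if "?nb \<le> i" for i using Dk_stay[OF b that] .
  have ab: "(D ^^ ?n) (a * b) = 0"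
    unfolding leibniz
  proof (rule sum.neutral, intro ballI)
    fix i assume "i \<in> {..?n}"
    show "of_nat (?n choose i) * ((D ^^ i) a * (D ^^ (?n - i)) b) = 0"
      using za zb by (cases "?na \<le> i") auto
  qed
  have "Ex emb D t (a * b) = (\<Sum>k<?n. cf emb t k * (D ^^ k) (a * b))" by (rule Ex_cut[OF ab])
  also have "\<dots> = (\<Sum>k<?n. \<Sum>i\<le>k. ?P i * ?Q (k - i))"
    unfolding leibniz sum_distrib_left
  proof (intro sum.cong refl)
    fix k i :: nat assume "i \<in> {..k}"
    then have "cf emb t k * of_nat (k choose i) = cf emb t i * cf emb t (k - i)"
      using cf_mult[of t i "k - i"] by simp
    then show "cf emb t k * (of_nat (k choose i) * ((D ^^ i) a * (D ^^ (k - i)) b)) = ?P i * ?Q (k - i)"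
      by (metis (no_types, lifting) mult.assoc mult.left_commute)
  qed
  also have "\<dots> = (\<Sum>(i, j)\<in>{(i, j). i + j < ?n}. ?P i * ?Q j)"
    by (rule sum.triangle_reindex[symmetric])
  also have "\<dots> = (\<Sum>(i, j)\<in>{..<?na} \<times> {..<?nb}. ?P i * ?Q j)"
  proof (rule sum.mono_neutral_right)
    show "finite {(i, j). i + j < ?n}"
      by (rule finite_subset[of _ "{..<?n} \<times> {..<?n}"]) auto
    show "{..<?na} \<times> {..<?nb} \<subseteq> {(i, j). i + j < ?n}" by auto
    show "\<forall>p\<in>{(i, j). i + j < ?n} - {..<?na} \<times> {..<?nb}. (case p of (i, j) \<Rightarrow> ?P i * ?Q j) = 0"
      using za zb by (metis (no_types, lifting) DiffE SigmaI lessThan_iff mult_zero_left mult_zero_right not_le prod.case_eq_if prod.collapse)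
  qed
  also have "\<dots> = (\<Sum>i<?na. ?P i) * (\<Sum>j<?nb. ?Q j)"
    by (simp add: sum_product sum.cartesian_product)
  also have "\<dots> = Ex emb D t a * Ex emb D t b" unfolding Ex_def ..
  finally show ?thesis .
qed

lemma cf_add: "cf emb (s + t) k = (\<Sum>j\<le>k. cf emb s j * cf emb t (k - j))"
proof -
  have "(s + t) ^ k / fact k = (\<Sum>j\<le>k. s ^ j / fact j * (t ^ (k - j) / fact (k - j)))"
    unfolding binomial_ring sum_divide_distrib
  proof (intro sum.cong refl)
    fix j assume "j \<in> {..k}"
    then have "j \<le> k" by simp
    then show "of_nat (k choose j) * s ^ j * t ^ (k - j) / fact k = s ^ j / fact j * (t ^ (k - j) / fact (k - j))"
      by (simp add: binomial_fact field_simps)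
  qed
  then show ?thesis unfolding cf_def sm_sum[OF sm, symmetric] sm_mult[OF sm, symmetric] by simp
qed

lemma Ex_comp: "Ex emb D s (Ex emb D t x) = Ex emb D (s + t) x"
proof -
  let ?n = "nil D x"
  let ?X = "\<lambda>k. (D ^^ k) x"
  have x: "?X ?n = 0" by (rule nil_spec)
  have z: "?X k = 0" if "?n \<le> k" for k using Dk_stay[OF x that] .
  let ?y = "Ex emb D t x"
  have y: "?y = (\<Sum>i<?n. cf emb t i * ?X i)" by (rule Ex_cut[OF x])
  have Dy: "(D ^^ j) ?y = (\<Sum>i<?n. cf emb t i * ?X (j + i))" for j
    unfolding y Dk_sum by (simp add: cf_def Dk_scal Dk_Dk)
  have yn: "(D ^^ ?n) ?y = 0" unfolding Dy using z by simp
  have "Ex emb D s ?y = (\<Sum>j<?n. cf emb s j * (\<Sum>i<?n. cf emb t i * ?X (j + i)))"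
    unfolding Ex_cut[OF yn] Dy ..
  also have "\<dots> = (\<Sum>(j, i)\<in>{..<?n} \<times> {..<?n}. cf emb s j * cf emb t i * ?X (j + i))"
    by (simp add: sum_distrib_left sum.cartesian_product mult.assoc)
  also have "\<dots> = (\<Sum>(j, i)\<in>{(j, i). j + i < ?n}. cf emb s j * cf emb t i * ?X (j + i))"
  proof (rule sum.mono_neutral_right)
    show "{(j, i). j + i < ?n} \<subseteq> {..<?n} \<times> {..<?n}" by auto
    show "\<forall>p\<in>{..<?n} \<times> {..<?n} - {(j, i). j + i < ?n}. (case p of (j, i) \<Rightarrow> cf emb s j * cf emb t i * ?X (j + i)) = 0"
      using z by (auto, metis not_le)
  qed auto
  also have "\<dots> = (\<Sum>k<?n. \<Sum>j\<le>k. cf emb s j * cf emb t (k - j) * ?X (j + (k - j)))"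
    by (rule sum.triangle_reindex)
  also have "\<dots> = (\<Sum>k<?n. cf emb (s + t) k * ?X k)"
    unfolding cf_add sum_distrib_right by (intro sum.cong refl) auto
  also have "\<dots> = Ex emb D (s + t) x" by (rule Ex_cut[OF x, symmetric])
  finally show ?thesis .
qed

lemma Ex_zero: "Ex emb D 0 x = x"
proof -
  have x: "(D ^^ Suc (nil D x)) x = 0" by (rule Dk_stay[OF nil_spec]) simp
  show ?thesis unfolding Ex_cut[OF x] sum.lessThan_Suc_shift
    by (simp add: cf_def sm_zero[OF sm] sm_one[OF sm])
qed

lemma Ex_aut: "alg_aut emb (Ex emb D t)"
proof -
  have b: "bij (Ex emb D t)"
    by (rule o_bij[where g="Ex emb D (- t)"]) (auto simp: Ex_comp Ex_zero)
  show ?thesis using b Ex_add Ex_scal Ex_mult Ex_one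
    by (simp add: alg_aut_def lin_map_def)
qed

lemma D_U:
  assumes ls: "lin_subspace emb U" and aut: "\<And>\<phi>. alg_aut emb \<phi> \<Longrightarrow> \<phi> ` U \<subseteq> U" and u: "u \<in> U"
  shows "D u \<in> U"
proof -
  let ?n = "Suc (Suc (nil D u))"
  have x: "(D ^^ ?n) u = 0" by (rule Dk_stay[OF nil_spec]) simp
  have "(\<Sum>k<?n. emb (t ^ k) * (emb (inverse (fact k)) * (D ^^ k) u)) \<in> U" for t
  proof -
    have "Ex emb D t u \<in> U" using aut[OF Ex_aut] u by blast
    also have "Ex emb D t u = (\<Sum>k<?n. emb (t ^ k) * (emb (inverse (fact k)) * (D ^^ k) u))"
      unfolding Ex_cut[OF x] cf_def
      by (intro sum.cong refl) (simp add: divide_inverse sm_mult[OF sm] mult.assoc)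
    finally show ?thesis .
  qed
  then have "emb (inverse (fact 1)) * (D ^^ 1) u \<in> U"
    using poly_lemma[OF sm ls, where m="?n" and v="\<lambda>k. emb (inverse (fact k)) * (D ^^ k) u" and k=1]
    by auto
  then show ?thesis by (simp add: sm_one[OF sm])
qed

end

theorem lemma3:
  fixes emb :: "'a::field_char_0 \<Rightarrow> 'b::idom" and U :: "'b set"
  assumes "alg_closed_field TYPE('a)"
    and "structure_map emb"
    and "finitely_generated_alg emb"
    and "lin_subspace emb U"
    and "\<And>\<phi>. alg_aut emb \<phi> \<Longrightarrow> \<phi> ` U \<subseteq> U"
  shows "(\<forall>D. derivation emb D \<and> locally_nilpotent D \<longrightarrow> D ` U \<subseteq> U)
    \<and> (\<forall>A. Z_graded_alg emb A \<longrightarrow> internal_direct_sum U (\<lambda>i. U \<inter> A i))"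
proof
  show "\<forall>D. derivation emb D \<and> locally_nilpotent D \<longrightarrow> D ` U \<subseteq> U"
    using D_U[OF assms(2) _ _ assms(4) assms(5)] by blast
  show "\<forall>A. Z_graded_alg emb A \<longrightarrow> internal_direct_sum U (\<lambda>i. U \<inter> A i)"
    using graded_part[OF assms(2) assms(4) assms(5)] by blast
qed

end
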